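(* Let $A$ be an $n\times n$ real matrix whose eigenvalues are distinct, and let $p\geq 1$ be an integer. Then the following are equivalent: (i) there exists a vector $B_v\in\mathbb{R}^n$ with at most $k$ nonzero entries such that the system $\frac{dx(t)}{dt}=Ax(t)+B_v u(t)$ is controllable; (ii) there exists a real $n\times p$ matrix $B_f$ with at most $k$ nonzero entries such that the system $\frac{dx(t)}{dt}=Ax(t)+B_f u(t)$ is controllable.
   Context: Controllability refers to the usual notion for continuous-time linear time-invariant systems $\frac{dx}{dt}=Ax+Bu$ (controllability of the pair $(A,B)$). A vector or matrix is called $k$-sparse if it has at most $k$ nonzero entries; the paper phrases (i) as "the system $\Sigma_v$ is $k$-sparse controllable" and (ii) as "the system $\Sigma_f$ is $k$-sparse controllable". *)

theory Defs
  imports "HOL-Analysis.Analysis"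
begin

text \<open>Kalman controllability of the pair (A,B) for dx/dt = A x + B u:
  the columns of the controllability matrix [B, AB, ..., A^(n-1) B] span R^n.\<close>
definition controllable :: "real^'n^'n \<Rightarrow> real^'m^'n \<Rightarrow> bool" where
  "controllable A B \<longleftrightarrow>
     span {((\<lambda>x. A *v x) ^^ i) (column j B) | i j. i < CARD('n)} = UNIV"

text \<open>A vector viewed as an n x 1 input matrix.\<close>
definition col_matrix :: "real^'n \<Rightarrow> real^1^'n" where
  "col_matrix b = (\<chi> i j. b $ i)"

text \<open>Complexification of a real matrix.\<close>
definition cmat :: "real^'n^'n \<Rightarrow> complex^'n^'n" where
  "cmat A = (\<chi> i j. complex_of_real (A $ i $ j))"

text \<open>The (complex) eigenvalues of a real square matrix.\<close>
definition eigenvalues :: "real^'n^'n \<Rightarrow> complex set" where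
  "eigenvalues A = {c. \<exists>v. v \<noteq> 0 \<and> cmat A *v v = c *s v}"

text \<open>n x n matrix with distinct eigenvalues: n pairwise distinct eigenvalues.\<close>
definition distinct_eigenvalues :: "real^'n^'n \<Rightarrow> bool" where
  "distinct_eigenvalues A \<longleftrightarrow> card (eigenvalues A) = CARD('n)"

definition vec_sparse :: "nat \<Rightarrow> real^'n \<Rightarrow> bool" where
  "vec_sparse k b \<longleftrightarrow> card {i. b $ i \<noteq> 0} \<le> k"

definition mat_sparse :: "nat \<Rightarrow> real^'m^'n \<Rightarrow> bool" where
  "mat_sparse k B \<longleftrightarrow> card {(i, j). B $ i $ j \<noteq> 0} \<le> k"

end

theory Submission imports Defs begin

fun app :: "complex^'n^'n \<Rightarrow> complex list \<Rightarrow> complex^'n \<Rightarrow> complex^'n" where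
  "app M [] x = x"
| "app M (l # ls) x = M *v (app M ls x) - l *s app M ls x"

lemma app_add: "app M ls (x + y) = app M ls x + app M ls y"
  by (induction ls) (auto simp: algebra_simps matrix_vector_right_distrib vector_ssub_ldistrib)

lemma app_scale: "app M ls (c *s x) = c *s app M ls x"
  by (induction ls) (auto simp: vec.scale vector_ssub_ldistrib vector_smult_assoc mult.commute)

lemma app_linear: "Vector_Spaces.linear (*s) (*s) (app M ls)"
  unfolding Vector_Spaces.linear_iff using vec.vector_space_axioms by (simp add: app_add app_scale)

lemma app_zero: "app M ls 0 = 0"
  using app_scale[of M ls 0 0] by simp

lemma app_eig: "M *v v = \<mu> *s v \<Longrightarrow> app M ls v = (\<Prod>l\<leftarrow>ls. \<mu> - l) *s v"
  by (induction ls) (auto simp: vec.scale vector_smult_assoc algebra_simps)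

lemma app_comm: "app M ls (M *v x) = M *v app M ls x"
  by (induction ls) (auto simp: vec.scale vec.diff)

lemma app_comm_pow: "app M ls (((*v) M ^^ i) x) = ((*v) M ^^ i) (app M ls x)"
  by (induction i) (auto simp: app_comm)

lemma pow_zero: "((*v) (M::complex^'n^'n) ^^ i) 0 = 0"
  by (induction i) auto

lemma app_span: "app M ls x \<in> vec.span {((*v) M ^^ j) x | j. j \<le> length ls}"
proof (induction ls)
  case Nil
  show ?case by (rule vec.span_base) (auto intro: exI[of _ 0])
next
  case (Cons l ls)
  let ?S = "\<lambda>m. {((*v) M ^^ j) x | j. j \<le> m}"
  have sub: "?S (length ls) \<subseteq> ?S (length (l#ls))" by auto
  have "M *v app M ls x \<in> vec.span (?S (length (l#ls)))"
  proof -
    have "M *v y \<in> vec.span (?S (length (l#ls)))" if "y \<in> vec.span (?S (length ls))" for y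
    proof (rule vec.span_induct[OF that, where P="\<lambda>y. M *v y \<in> vec.span (?S (length (l#ls)))"])
      fix y assume "y \<in> ?S (length ls)"
      then obtain j where "j \<le> length ls" "y = ((*v) M ^^ j) x" by auto
      then show "M *v y \<in> vec.span (?S (length (l#ls)))" by (intro vec.span_base) (auto intro!: exI[of _ "Suc j"])
    next
      show "vec.subspace {y. M *v y \<in> vec.span (?S (length (l#ls)))}" unfolding vec.subspace_def
        by (auto simp: vec.scale matrix_vector_right_distrib intro: vec.span_add vec.span_scale vec.span_zero)
    qed
    then show ?thesis using Cons by blast
  qed
  then show ?case using Cons vec.span_mono[OF sub]
    by (auto intro!: vec.span_diff vec.span_scale)
qed

definition cv :: "real^'n \<Rightarrow> complex^'n" where "cv x = (\<chi> i. complex_of_real (x $ i))"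
definition rvec :: "complex^'n \<Rightarrow> real^'n" where "rvec w = (\<chi> i. Re (w $ i))"
definition imv :: "complex^'n \<Rightarrow> real^'n" where "imv w = (\<chi> i. Im (w $ i))"

lemma cv_add: "cv (x + y) = cv x + cv y" by (simp add: cv_def vec_eq_iff)
lemma cv_scale: "cv (r *\<^sub>R x) = complex_of_real r *s cv x" by (simp add: cv_def vec_eq_iff)
lemma cv_zero: "cv 0 = 0" by (simp add: cv_def vec_eq_iff)
lemma cmat_cv: "cmat A *v cv x = cv (A *v x)"
  by (simp add: cv_def cmat_def vec_eq_iff matrix_vector_mult_def)
lemma cmat_pow_cv: "((*v) (cmat A) ^^ i) (cv x) = cv (((*v) A ^^ i) x)"
  by (induction i) (auto simp: cmat_cv)
lemma rvec_cv: "rvec (cv x) = x" by (simp add: cv_def rvec_def vec_eq_iff)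
lemma imv_cv: "imv (cv x) = 0" by (simp add: cv_def imv_def vec_eq_iff)
lemma cv_decomp: "w = cv (rvec w) + \<i> *s cv (imv w)"
  by (simp add: cv_def rvec_def imv_def vec_eq_iff complex_eq_iff)
lemma scalev_of_real: "complex_of_real r *s (w::complex^'n) = r *\<^sub>R w"
  by (auto simp: vec_eq_iff vector_scaleR_component complex_eq_iff)

lemma cv_span: "x \<in> span S \<Longrightarrow> cv x \<in> vec.span (cv ` S)"
proof (rule span_induct[where P="\<lambda>x. cv x \<in> vec.span (cv ` S)"])
  show "subspace {x. cv x \<in> vec.span (cv ` S)}"
    unfolding subspace_def
    by (auto simp: cv_add cv_scale cv_zero intro: vec.span_add vec.span_scale vec.span_zero)
qed (auto intro: vec.span_base)

lemma real_span_full: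
  fixes S :: "(real^'n) set"
  assumes "vec.span (cv ` S) = UNIV"
  shows "span S = UNIV"
proof -
  have "rvec w \<in> span S \<and> imv w \<in> span S" for w :: "complex^'n"
  proof (rule vec.span_induct[where P="\<lambda>w. rvec w \<in> span S \<and> imv w \<in> span S"])
    show "w \<in> vec.span (cv ` S)" using assms by auto
    have re_s: "rvec (c *s w) = Re c *\<^sub>R rvec w - Im c *\<^sub>R imv w"
     and im_s: "imv (c *s w) = Re c *\<^sub>R imv w + Im c *\<^sub>R rvec w" for c and w :: "complex^'n"
      by (auto simp: rvec_def imv_def vec_eq_iff)
    have addz: "rvec (x + y) = rvec x + rvec y" "imv (x + y) = imv x + imv y" "rvec 0 = 0" "imv (0::complex^'n) = 0" for x y :: "complex^'n"
      by (auto simp: rvec_def imv_def vec_eq_iff)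
    show "vec.subspace {w. rvec w \<in> span S \<and> imv w \<in> span S}"
      unfolding vec.subspace_def
      by (auto simp: re_s im_s addz intro!: span_add span_diff span_mul span_zero)
  qed (auto simp: rvec_cv imv_cv intro: span_base span_zero)
  then have "x \<in> span S" for x using rvec_cv[of x] by metis
  then show ?thesis by auto
qed

lemma subs_finite:
  fixes y z :: "'b::real_vector"
  assumes "y \<noteq> 0 \<or> z \<noteq> 0"
  shows "finite {t::real. y + t *\<^sub>R z = 0}"
proof -
  let ?S = "{t::real. y + t *\<^sub>R z = 0}"
  have uniq: "a = b" if "a \<in> ?S" "b \<in> ?S" for a b
  proof -
    have "(a - b) *\<^sub>R z = (y + a *\<^sub>R z) - (y + b *\<^sub>R z)" by (simp add: scaleR_diff_left)
    also have "\<dots> = 0" using that by simp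
    finally have "a = b \<or> z = 0" by simp
    moreover have "z = 0 \<Longrightarrow> False" using that assms by simp
    ultimately show ?thesis by blast
  qed
  show ?thesis
  proof (cases "?S = {}")
    case False
    then obtain a where "a \<in> ?S" by blast
    then have "?S \<subseteq> {a}" using uniq by blast
    then show ?thesis using finite_subset by blast
  qed simp
qed

lemma avoid:
  fixes \<phi> :: "'i \<Rightarrow> 'a::real_vector \<Rightarrow> 'b::real_vector"
  assumes "finite I"
    and "\<forall>i\<in>I. \<forall>x y. \<phi> i (x + y) = \<phi> i x + \<phi> i y"
    and "\<forall>i\<in>I. \<forall>r x. \<phi> i (r *\<^sub>R x) = r *\<^sub>R \<phi> i x"
    and "\<forall>i\<in>I. \<exists>d. \<phi> i d \<noteq> 0"
  shows "\<exists>c. \<forall>i\<in>I. \<phi> i c \<noteq> 0"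
  using assms
proof (induction I rule: finite_induct)
  case empty
  then show ?case by simp
next
  case (insert a F)
  then obtain c where c: "\<forall>i\<in>F. \<phi> i c \<noteq> 0" by auto
  obtain d where d: "\<phi> a d \<noteq> 0" using insert.prems by auto
  define T where "T = (\<Union>i\<in>insert a F. {t::real. \<phi> i c + t *\<^sub>R \<phi> i d = 0})"
  have "finite T" unfolding T_def
    using insert.hyps(1) c d by (auto intro!: subs_finite)
  then obtain t where t: "t \<notin> T" using ex_new_if_finite[OF infinite_UNIV_char_0] by blast
  show ?case
  proof (intro exI[of _ "c + t *\<^sub>R d"] ballI)
    fix i assume i: "i \<in> insert a F"
    then have "\<phi> i (c + t *\<^sub>R d) = \<phi> i c + t *\<^sub>R \<phi> i d" using insert.prems by auto
    then show "\<phi> i (c + t *\<^sub>R d) \<noteq> 0" using t i unfolding T_def by auto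
  qed
qed

lemma app_sum: "app M ls (\<Sum>i\<in>I. g i) = (\<Sum>i\<in>I. app M ls (g i))"
  by (induction I rule: infinite_finite_induct) (auto simp: app_add app_zero)


context
  fixes A :: "real^'n^'n" and L :: "complex set" and v :: "complex \<Rightarrow> complex^'n"
    and ls :: "complex \<Rightarrow> complex list"
  assumes finL: "finite L" and cardL: "card L = CARD('n)"
    and eig: "\<And>l. l \<in> L \<Longrightarrow> v l \<noteq> 0 \<and> cmat A *v v l = l *s v l"
    and lsd: "\<And>l. l \<in> L \<Longrightarrow> set (ls l) = L - {l} \<and> distinct (ls l)"
begin

definition kap where "kap l = (\<Prod>m\<leftarrow>ls l. l - m)"

lemma kap_nz: "l \<in> L \<Longrightarrow> kap l \<noteq> 0"
proof -
  assume l: "l \<in> L"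
  have "l \<notin> set (ls l)" using lsd[OF l] by blast
  then have "0 \<notin> set (map ((-) l) (ls l))" by auto
  then show ?thesis unfolding kap_def by (simp only: prod_list_zero_iff) simp
qed

lemma P_other: "l \<in> L \<Longrightarrow> m \<in> L \<Longrightarrow> m \<noteq> l \<Longrightarrow> app (cmat A) (ls l) (v m) = 0"
  using app_eig[of "cmat A" "v m" m "ls l"] eig[of m] lsd[of l]
  by (auto simp: prod_list_zero_iff)

lemma P_self: "l \<in> L \<Longrightarrow> app (cmat A) (ls l) (v l) = kap l *s v l"
  using app_eig[of "cmat A" "v l" l "ls l"] eig[of l] by (simp add: kap_def)

lemma P_sum: "l \<in> L \<Longrightarrow> app (cmat A) (ls l) (\<Sum>m\<in>L. c m *s v m) = (c l * kap l) *s v l"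
proof -
  assume l: "l \<in> L"
  have "app (cmat A) (ls l) (\<Sum>m\<in>L. c m *s v m) = (\<Sum>m\<in>L. c m *s app (cmat A) (ls l) (v m))"
    by (simp add: app_sum app_scale)
  also have "\<dots> = c l *s app (cmat A) (ls l) (v l) + (\<Sum>m\<in>L - {l}. c m *s app (cmat A) (ls l) (v m))"
    by (rule sum.remove[OF finL l])
  also have "(\<Sum>m\<in>L - {l}. c m *s app (cmat A) (ls l) (v m)) = 0"
    by (rule sum.neutral) (auto simp: P_other l)
  finally show ?thesis by (simp add: P_self l)
qed

lemma inj_v: "inj_on v L"
proof
  fix l m assume lm: "l \<in> L" "m \<in> L" "v l = v m"
  have "l *s v l = m *s v l" using eig[of l] eig[of m] lm by metis
  then have "(l - m) *s v l = 0" by (simp add: vec.scale_left_diff_distrib)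
  then show "l = m" using eig[of l] lm by simp
qed

lemma indep_v: "vec.independent (v ` L)"
  unfolding vec.independent_explicit
proof (intro conjI allI impI ballI)
  show "finite (v ` L)" using finL by simp
  fix c u assume sum0: "(\<Sum>x\<in>v ` L. c x *s x) = 0" and u: "u \<in> v ` L"
  then obtain l where l: "l \<in> L" "u = v l" by auto
  have "(\<Sum>m\<in>L. c (v m) *s v m) = 0" using sum0 by (simp add: sum.reindex[OF inj_v])
  then have "(c (v l) * kap l) *s v l = 0" using P_sum[OF l(1), of "\<lambda>m. c (v m)"] by (simp add: app_zero)
  then show "c u = 0" using eig[of l] kap_nz[of l] l by simp
qed

lemma span_v: "vec.span (v ` L) = UNIV"
proof -
  have "vec.dim (v ` L) = card L"
    using vec.dim_eq_card_independent[OF indep_v] card_image[OF inj_v] by simp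
  then show ?thesis using vec.dim_eq_full[of "v ` L"] cardL
    by (simp add: vec.dimension_def card_cart_basis)
qed

lemma P_range: "l \<in> L \<Longrightarrow> \<exists>z. app (cmat A) (ls l) w = z *s v l"
proof -
  assume l: "l \<in> L"
  have "w \<in> vec.span (v ` L)" using span_v by simp
  then obtain u where "w = (\<Sum>x\<in>v ` L. u x *s x)"
    using vec.span_finite[of "v ` L"] finL by auto
  then have "w = (\<Sum>m\<in>L. u (v m) *s v m)" by (simp add: sum.reindex[OF inj_v])
  then have "app (cmat A) (ls l) w = (u (v l) * kap l) *s v l"
    using P_sum[OF l, of "\<lambda>m. u (v m)"] by simp
  then show ?thesis by blast
qed

lemma necessity:
  assumes ctrl: "controllable A B" and l: "l \<in> L"
  shows "\<exists>j. app (cmat A) (ls l) (cv (column j B)) \<noteq> 0"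
proof (rule ccontr)
  assume "\<not> ?thesis"
  then have z: "\<And>j. app (cmat A) (ls l) (cv (column j B)) = 0" by blast
  let ?S = "{((\<lambda>x. A *v x) ^^ i) (column j B) | i j. i < CARD('n)}"
  have zS: "app (cmat A) (ls l) y = 0" if "y \<in> cv ` ?S" for y
    using that by (auto simp: cmat_pow_cv[symmetric] app_comm_pow z pow_zero)
  have "app (cmat A) (ls l) (cv x) = 0" for x
  proof -
    have "x \<in> span ?S" using ctrl unfolding controllable_def by simp
    then have "cv x \<in> vec.span (cv ` ?S)" by (rule cv_span)
    then show ?thesis using vec.linear_eq_0_on_span[OF app_linear zS] by blast
  qed
  then have "app (cmat A) (ls l) (cv (rvec (v l)) + \<i> *s cv (imv (v l))) = 0"
    by (simp only: app_add app_scale vec.scale_zero_right add_0)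
  then have "app (cmat A) (ls l) (v l) = 0"
    using arg_cong[OF cv_decomp[of "v l"], of "app (cmat A) (ls l)"] by simp
  then show False using P_self[OF l] eig[OF l] kap_nz[OF l] by simp
qed

lemma sufficiency:
  assumes nz: "\<forall>l\<in>L. app (cmat A) (ls l) (cv b) \<noteq> 0"
  shows "controllable A (col_matrix b)"
proof -
  let ?K = "{((\<lambda>x. A *v x) ^^ i) b | i. i < CARD('n)}"
  have colb: "column j (col_matrix b) = b" for j by (simp add: column_def col_matrix_def vec_eq_iff)
  have eqK: "{((\<lambda>x. A *v x) ^^ i) (column j (col_matrix b)) | i j. i < CARD('n)} = ?K"
    by (simp only: colb) blast
  have "v l \<in> vec.span (cv ` ?K)" if l: "l \<in> L" for l
  proof -
    have len: "length (ls l) < CARD('n)"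
    proof -
      have "length (ls l) = card (L - {l})" using lsd[OF l] distinct_card[of "ls l"] by simp
      also have "\<dots> = card L - 1" using finL l by simp
      also have "\<dots> < card L"
      proof -
        have "card L > 0" using finL l card_gt_0_iff by blast
        then show ?thesis by simp
      qed
      finally show ?thesis using cardL by simp
    qed
    have sub: "{((*v) (cmat A) ^^ j) (cv b) | j. j \<le> length (ls l)} \<subseteq> cv ` ?K"
    proof clarify
      fix j assume "j \<le> length (ls l)"
      then have "j < CARD('n)" using len by linarith
      then have "((*v) A ^^ j) b \<in> ?K" by blast
      then show "((*v) (cmat A) ^^ j) (cv b) \<in> cv ` ?K" unfolding cmat_pow_cv by (rule imageI)
    qed
    have inP: "app (cmat A) (ls l) (cv b) \<in> vec.span (cv ` ?K)"
      by (rule subsetD[OF vec.span_mono[OF sub] app_span])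
    obtain z where zz: "app (cmat A) (ls l) (cv b) = z *s v l" using P_range[OF l] by blast
    then have "z \<noteq> 0" using nz l by auto
    then have eqv: "inverse z *s app (cmat A) (ls l) (cv b) = v l"
      unfolding zz by (simp add: vector_smult_assoc)
    have "inverse z *s app (cmat A) (ls l) (cv b) \<in> vec.span (cv ` ?K)" by (rule vec.span_scale[OF inP])
    then show ?thesis unfolding eqv .
  qed
  then have "v ` L \<subseteq> vec.span (cv ` ?K)" by blast
  then have "vec.span (v ` L) \<subseteq> vec.span (cv ` ?K)"
    by (rule vec.span_minimal[OF _ vec.subspace_span])
  then have "vec.span (cv ` ?K) = UNIV" using span_v by auto
  then have "span ?K = UNIV" by (rule real_span_full)
  then show ?thesis unfolding controllable_def eqK .
qed

end


theorem theorem3: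
  fixes A :: "real^'n^'n" and k :: nat
  assumes "distinct_eigenvalues A"
  shows "(\<exists>Bv :: real^'n. vec_sparse k Bv \<and> controllable A (col_matrix Bv)) \<longleftrightarrow>
         (\<exists>Bf :: real^'p^'n. mat_sparse k Bf \<and> controllable A Bf)"
proof -
  let ?L = "eigenvalues A"
  have cardL: "card ?L = CARD('n)" using assms by (simp add: distinct_eigenvalues_def)
  have finL: "finite ?L" using cardL by (intro card_ge_0_finite) simp
  have "\<forall>l\<in>?L. \<exists>w. w \<noteq> 0 \<and> cmat A *v w = l *s w" by (simp add: eigenvalues_def)
  then obtain v where eig: "\<And>l. l \<in> ?L \<Longrightarrow> v l \<noteq> 0 \<and> cmat A *v v l = l *s v l" by metis
  have "\<forall>l\<in>?L. \<exists>xs. set xs = ?L - {l} \<and> distinct xs" using finL finite_distinct_list by blast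
  then obtain ls where lsd: "\<And>l. l \<in> ?L \<Longrightarrow> set (ls l) = ?L - {l} \<and> distinct (ls l)" by metis
  show ?thesis
  proof
    assume "\<exists>Bv :: real^'n. vec_sparse k Bv \<and> controllable A (col_matrix Bv)"
    then obtain Bv :: "real^'n" where sp: "vec_sparse k Bv" and ct: "controllable A (col_matrix Bv)"
      by blast
    obtain j0 :: 'p where True by blast
    define Bf :: "real^'p^'n" where "Bf = (\<chi> i j. if j = j0 then Bv $ i else 0)"
    have "{(i, j). Bf $ i $ j \<noteq> 0} = (\<lambda>i. (i, j0)) ` {i. Bv $ i \<noteq> 0}"
      by (auto simp: Bf_def split: if_splits)
    then have "mat_sparse k Bf" using sp unfolding mat_sparse_def vec_sparse_def
      by (simp add: card_image inj_on_def)
    moreover have "controllable A Bf"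
    proof -
      let ?Sv = "{((\<lambda>x. A *v x) ^^ i) (column j (col_matrix Bv)) | i j. i < CARD('n)}"
      let ?Sf = "{((\<lambda>x. A *v x) ^^ i) (column j Bf) | i j. i < CARD('n)}"
      have col: "column j (col_matrix Bv) = column j0 Bf" for j
        by (simp add: column_def col_matrix_def Bf_def vec_eq_iff)
      have "?Sv \<subseteq> ?Sf" unfolding col by blast
      then have "span ?Sv \<subseteq> span ?Sf" by (rule span_mono)
      then show ?thesis using ct unfolding controllable_def by auto
    qed
    ultimately show "\<exists>Bf :: real^'p^'n. mat_sparse k Bf \<and> controllable A Bf" by blast
  next
    assume "\<exists>Bf :: real^'p^'n. mat_sparse k Bf \<and> controllable A Bf"
    then obtain Bf :: "real^'p^'n" where sp: "mat_sparse k Bf" and ct: "controllable A Bf"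
      by blast
    define \<phi> where "\<phi> l c = app (cmat A) (ls l) (cv (Bf *v c))" for l and c :: "real^'p"
    have "\<exists>c. \<forall>l\<in>?L. \<phi> l c \<noteq> 0"
    proof (rule avoid[OF finL])
      show "\<forall>l\<in>?L. \<forall>x y. \<phi> l (x + y) = \<phi> l x + \<phi> l y"
        by (simp add: \<phi>_def matrix_vector_right_distrib cv_add app_add)
      show "\<forall>l\<in>?L. \<forall>r x. \<phi> l (r *\<^sub>R x) = r *\<^sub>R \<phi> l x"
      proof -
        have aR: "app (cmat A) xs (r *\<^sub>R w) = r *\<^sub>R app (cmat A) xs w" for xs r w
          using app_scale[of "cmat A" xs "complex_of_real r" w] by (simp add: scalev_of_real)
        show ?thesis by (simp add: \<phi>_def matrix_vector_mult_scaleR cv_scale scalev_of_real aR)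
      qed
      show "\<forall>l\<in>?L. \<exists>d. \<phi> l d \<noteq> 0"
      proof
        fix l assume "l \<in> ?L"
        then obtain j where "app (cmat A) (ls l) (cv (column j Bf)) \<noteq> 0"
          using necessity[OF finL cardL eig lsd ct] by blast
        then show "\<exists>d. \<phi> l d \<noteq> 0"
          by (intro exI[of _ "axis j 1"]) (simp add: \<phi>_def matrix_vector_mult_basis)
      qed
    qed
    then obtain c where c: "\<forall>l\<in>?L. \<phi> l c \<noteq> 0" by blast
    define b where "b = Bf *v c"
    have "controllable A (col_matrix b)"
      using sufficiency[OF finL cardL eig lsd] c by (simp add: \<phi>_def b_def)
    moreover have "vec_sparse k b"
    proof -
      have "{i. b $ i \<noteq> 0} \<subseteq> fst ` {(i, j). Bf $ i $ j \<noteq> 0}"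
      proof
        fix i assume "i \<in> {i. b $ i \<noteq> 0}"
        then have "(\<Sum>j\<in>UNIV. Bf $ i $ j * c $ j) \<noteq> 0" by (simp add: b_def matrix_vector_mult_def)
        then obtain j where "Bf $ i $ j \<noteq> 0"
          by (metis (mono_tags, lifting) mult_eq_0_iff sum.neutral)
        then show "i \<in> fst ` {(i, j). Bf $ i $ j \<noteq> 0}" by force
      qed
      then have "card {i. b $ i \<noteq> 0} \<le> card (fst ` {(i, j). Bf $ i $ j \<noteq> 0})"
        by (intro card_mono) simp_all
      also have "\<dots> \<le> card {(i, j). Bf $ i $ j \<noteq> 0}" by (rule card_image_le) simp
      also have "\<dots> \<le> k" using sp unfolding mat_sparse_def .
      finally show ?thesis unfolding vec_sparse_def .
    qed
    ultimately show "\<exists>Bv :: real^'n. vec_sparse k Bv \<and> controllable A (col_matrix Bv)" by blast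
  qed
qed

end
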